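(* Let $R$ be a finite rack with two decompositions $R=S_1\cup T_1$ and $R=S_2\cup T_2$. If $T_1\cong T_2$ and the subracks $S_1$ and $S_2$ are connected, then $S_1\cong S_2$.
   Context: A rack is a set $R$ with a binary operation $\rhd$ such that every left multiplication $\ell_a\colon b\mapsto a\rhd b$ is a bijection and $a\rhd(b\rhd c)=(a\rhd b)\rhd(a\rhd c)$ for all $a,b,c$. A subrack of $R$ is a subset $S$ with $\ell_s(S)=S$ for all $s\in S$, regarded as a rack with the restricted operation. A decomposition $R=S\cup T$ means that $S$ and $T$ are disjoint non-empty subracks whose union is $R$. The inner automorphism group $\mathrm{Inn}(R)$ is the subgroup of the symmetric group on $R$ generated by all $\ell_a$; a rack is connected if it is non-empty and $\mathrm{Inn}(R)$ acts transitively on it. *)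

theory Defs
  imports Main
begin

definition rack :: "'a set \<Rightarrow> ('a \<Rightarrow> 'a \<Rightarrow> 'a) \<Rightarrow> bool" where
  "rack X op \<longleftrightarrow>
     (\<forall>a\<in>X. bij_betw (op a) X X) \<and>
     (\<forall>a\<in>X. \<forall>b\<in>X. \<forall>c\<in>X. op a (op b c) = op (op a b) (op a c))"

definition subrack :: "'a set \<Rightarrow> ('a \<Rightarrow> 'a \<Rightarrow> 'a) \<Rightarrow> 'a set \<Rightarrow> bool" where
  "subrack X op S \<longleftrightarrow> S \<subseteq> X \<and> (\<forall>s\<in>S. op s ` S = S)"

definition decomposition :: "'a set \<Rightarrow> ('a \<Rightarrow> 'a \<Rightarrow> 'a) \<Rightarrow> 'a set \<Rightarrow> 'a set \<Rightarrow> bool" where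
  "decomposition X op S T \<longleftrightarrow>
     subrack X op S \<and> subrack X op T \<and> S \<noteq> {} \<and> T \<noteq> {} \<and> S \<inter> T = {} \<and> S \<union> T = X"

text \<open>Orbit of x under Inn(X): closure under all left multiplications and their inverses
  (the group generated by the l_a, acting on X).\<close>
inductive_set inn_orbit :: "'a set \<Rightarrow> ('a \<Rightarrow> 'a \<Rightarrow> 'a) \<Rightarrow> 'a \<Rightarrow> 'a set"
  for X :: "'a set" and op :: "'a \<Rightarrow> 'a \<Rightarrow> 'a" and x :: 'a where
  base: "x \<in> X \<Longrightarrow> x \<in> inn_orbit X op x"
| left: "y \<in> inn_orbit X op x \<Longrightarrow> a \<in> X \<Longrightarrow> op a y \<in> inn_orbit X op x"
| left_inv: "y \<in> inn_orbit X op x \<Longrightarrow> a \<in> X \<Longrightarrow> the_inv_into X (op a) y \<in> inn_orbit X op x"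

definition connected_rack :: "'a set \<Rightarrow> ('a \<Rightarrow> 'a \<Rightarrow> 'a) \<Rightarrow> bool" where
  "connected_rack X op \<longleftrightarrow> X \<noteq> {} \<and> (\<forall>x\<in>X. \<forall>y\<in>X. y \<in> inn_orbit X op x)"

definition rack_iso :: "'a set \<Rightarrow> ('a \<Rightarrow> 'a \<Rightarrow> 'a) \<Rightarrow> 'b set \<Rightarrow> ('b \<Rightarrow> 'b \<Rightarrow> 'b) \<Rightarrow> bool" where
  "rack_iso X opX Y opY \<longleftrightarrow>
     (\<exists>f. bij_betw f X Y \<and> (\<forall>a\<in>X. \<forall>b\<in>X. f (opX a b) = opY (f a) (f b)))"

end

theory Submission
  imports Defs "HOL-Library.FuncSet"
begin

definition emb :: "'a set \<Rightarrow> 'a set \<Rightarrow> ('a \<Rightarrow> 'a \<Rightarrow> 'a) \<Rightarrow> ('a \<Rightarrow> 'a) set" where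
  "emb C X op = {f. f \<in> extensional C \<and> inj_on f C \<and> f ` C \<subseteq> X \<and>
      (\<forall>a\<in>C. \<forall>b\<in>C. f (op a b) = op (f a) (f b))}"

lemma decomp_sym: "decomposition R op A B \<Longrightarrow> decomposition R op B A"
  unfolding decomposition_def by auto

lemma closure_side:
  assumes "rack R op" "decomposition R op A B" "r \<in> R" "x \<in> A"
  shows "op r x \<in> A"
proof -
  have AB: "A \<subseteq> R" "B \<subseteq> R" "A \<inter> B = {}" "R = A \<union> B"
    and sA: "\<forall>s\<in>A. op s ` A = A" and sB: "\<forall>s\<in>B. op s ` B = B"
    using assms(2) unfolding decomposition_def subrack_def by auto
  have bij: "bij_betw (op r) R R" using assms(1,3) unfolding rack_def by auto
  have inj: "inj_on (op r) R" using bij unfolding bij_betw_def by auto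
  have rx: "op r x \<in> R" using bij assms(4) AB(1) unfolding bij_betw_def by auto
  show ?thesis
  proof (cases "r \<in> A")
    case True then show ?thesis using sA assms(4) by blast
  next
    case False
    then have rB: "r \<in> B" using AB(4) assms(3) by auto
    show ?thesis
    proof (rule ccontr)
      assume "op r x \<notin> A"
      then have "op r x \<in> B" using rx AB(4) by auto
      then have "op r x \<in> op r ` B" using sB rB by auto
      then obtain b where "b \<in> B" "op r x = op r b" by auto
      then have "x = b" using inj AB(1,2) assms(4) by (meson inj_onD subsetD)
      then show False using \<open>b \<in> B\<close> assms(4) AB(3) by auto
    qed
  qed
qed

lemma orbit_in:
  assumes "rack R op" "decomposition R op A B" "C \<subseteq> R" "\<forall>c\<in>C. op c ` C = C"
    "h ` C \<subseteq> R" "\<forall>a\<in>C. \<forall>b\<in>C. h (op a b) = op (h a) (h b)" "h c0 \<in> A"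
    and y: "y \<in> inn_orbit C op c0"
  shows "y \<in> C \<and> h y \<in> A"
  using y
proof (induction rule: inn_orbit.induct)
  case base
  then show ?case using assms by auto
next
  case (left y a)
  have "h (op a y) = op (h a) (h y)" using assms(6) left by auto
  moreover have "h a \<in> R" using assms(5) left by auto
  moreover have "op a y \<in> C" using assms(4) left by auto
  ultimately show ?case using closure_side[OF assms(1,2)] left by auto
next
  case (left_inv y a)
  then have "y \<in> op a ` C" using assms(4) by auto
  then obtain z where z: "z \<in> C" "y = op a z" by auto
  have aC: "a \<in> C" using left_inv by auto
  have "inj_on (op a) R" using assms(1,3) aC unfolding rack_def bij_betw_def by auto
  then have inj: "inj_on (op a) C" using assms(3) by (rule inj_on_subset)
  have tz: "the_inv_into C (op a) y = z" using z inj by (simp add: the_inv_into_f_f)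
  have hy: "h y = op (h a) (h z)" using z assms(6) left_inv by auto
  have "h z \<in> A"
  proof (rule ccontr)
    assume "h z \<notin> A"
    then have "h z \<in> B" using assms(2,5) z unfolding decomposition_def by auto
    then have "op (h a) (h z) \<in> B" using closure_side[OF assms(1) decomp_sym[OF assms(2)]] assms(5) left_inv by auto
    then show False using hy left_inv assms(2) unfolding decomposition_def by auto
  qed
  then show ?case using tz z by auto
qed

lemma image_side:
  assumes "rack R op" "decomposition R op A B" "subrack R op C" "connected_rack C op"
    "h ` C \<subseteq> R" "\<forall>a\<in>C. \<forall>b\<in>C. h (op a b) = op (h a) (h b)"
  shows "h ` C \<subseteq> A \<or> h ` C \<subseteq> B"
proof -
  obtain c0 where c0: "c0 \<in> C" using assms(4) unfolding connected_rack_def by auto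
  have CR: "C \<subseteq> R" "\<forall>c\<in>C. op c ` C = C" using assms(3) unfolding subrack_def by auto
  have orb: "\<forall>y\<in>C. y \<in> inn_orbit C op c0" using assms(4) c0 unfolding connected_rack_def by auto
  have RAB: "R = A \<union> B" using assms(2) unfolding decomposition_def by auto
  have hc0: "h c0 \<in> R" using assms(5) c0 by auto
  show ?thesis
  proof (cases "h c0 \<in> A")
    case True
    have "h y \<in> A" if "y \<in> C" for y
      using orbit_in[OF assms(1,2) CR assms(5,6) True] orb that by blast
    then show ?thesis by blast
  next
    case False
    then have hB: "h c0 \<in> B" using RAB hc0 by blast
    have "h y \<in> B" if "y \<in> C" for y
      using orbit_in[OF assms(1) decomp_sym[OF assms(2)] CR assms(5,6) hB] orb that by blast
    then show ?thesis by blast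
  qed
qed

lemma emb_finite: "finite X \<Longrightarrow> finite C \<Longrightarrow> finite (emb C X op)"
proof -
  assume "finite X" "finite C"
  then have "finite (PiE C (\<lambda>_. X))" by (simp add: finite_PiE)
  moreover have "emb C X op \<subseteq> PiE C (\<lambda>_. X)" unfolding emb_def PiE_def by auto
  ultimately show ?thesis by (rule finite_subset[rotated])
qed

lemma emb_split:
  assumes "rack R op" "decomposition R op A B" "subrack R op C" "connected_rack C op" "finite R"
  shows "card (emb C R op) = card (emb C A op) + card (emb C B op)"
proof -
  have CR: "C \<subseteq> R" using assms(3) unfolding subrack_def by auto
  have fC: "finite C" using CR assms(5) finite_subset by auto
  have AB: "A \<subseteq> R" "B \<subseteq> R" "A \<inter> B = {}" "A \<union> B = R" using assms(2) unfolding decomposition_def subrack_def by auto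
  have "emb C R op = emb C A op \<union> emb C B op"
  proof
    show "emb C R op \<subseteq> emb C A op \<union> emb C B op"
    proof
      fix f assume f: "f \<in> emb C R op"
      have f1: "f ` C \<subseteq> R" "\<forall>a\<in>C. \<forall>b\<in>C. f (op a b) = op (f a) (f b)"
        using f unfolding emb_def by auto
      have "f ` C \<subseteq> A \<or> f ` C \<subseteq> B"
        using image_side[OF assms(1-4) f1] .
      then show "f \<in> emb C A op \<union> emb C B op" using f unfolding emb_def by blast
    qed
    have "emb C A op \<subseteq> emb C R op" using AB(1) unfolding emb_def by blast
    moreover have "emb C B op \<subseteq> emb C R op" using AB(2) unfolding emb_def by blast
    ultimately show "emb C A op \<union> emb C B op \<subseteq> emb C R op" by blast
  qed
  moreover have "emb C A op \<inter> emb C B op = {}"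
  proof -
    obtain c0 where c0: "c0 \<in> C" using assms(4) unfolding connected_rack_def by auto
    { fix f assume "f \<in> emb C A op" "f \<in> emb C B op"
      then have "f c0 \<in> A" "f c0 \<in> B" using c0 unfolding emb_def by blast+
      then have False using AB(3) by blast }
    then show ?thesis by blast
  qed
  moreover have "finite (emb C A op)" "finite (emb C B op)"
    using emb_finite fC AB(1,2) assms(5) finite_subset by metis+
  ultimately show ?thesis by (simp add: card_Un_disjoint)
qed

lemma emb_le:
  assumes "inj_on g T" "g ` T \<subseteq> T'" "\<forall>a\<in>T. \<forall>b\<in>T. g (op a b) = op (g a) (g b)"
    "finite (emb C T' op)" "\<forall>a\<in>C. \<forall>b\<in>C. op a b \<in> C"
  shows "card (emb C T op) \<le> card (emb C T' op)"
proof -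
  let ?F = "\<lambda>f. restrict (g \<circ> f) C"
  have "inj_on ?F (emb C T op)"
  proof (rule inj_onI)
    fix f1 f2 assume f: "f1 \<in> emb C T op" "f2 \<in> emb C T op" "?F f1 = ?F f2"
    show "f1 = f2"
    proof (rule extensionalityI[of _ C])
      show "f1 \<in> extensional C" "f2 \<in> extensional C" using f unfolding emb_def by auto
      fix x assume x: "x \<in> C"
      then have "g (f1 x) = g (f2 x)" using f(3) by (metis comp_apply restrict_apply')
      moreover have "f1 x \<in> T" "f2 x \<in> T" using f x unfolding emb_def by auto
      ultimately show "f1 x = f2 x" using assms(1) by (meson inj_onD)
    qed
  qed
  moreover have "?F ` emb C T op \<subseteq> emb C T' op"
  proof
    fix h assume "h \<in> ?F ` emb C T op"
    then obtain f where f: "f \<in> emb C T op" "h = ?F f" by auto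
    have fT: "f ` C \<subseteq> T" and fi: "inj_on f C" and fh: "\<forall>a\<in>C. \<forall>b\<in>C. f (op a b) = op (f a) (f b)"
      using f unfolding emb_def by auto
    have "inj_on (g \<circ> f) C" using fi fT assms(1) by (simp add: comp_inj_on inj_on_subset)
    then have "inj_on h C" using f(2) by (simp add: inj_on_def)
    moreover have "h ` C \<subseteq> T'" using f(2) fT assms(2) by auto
    moreover have "\<forall>a\<in>C. \<forall>b\<in>C. h (op a b) = op (h a) (h b)"
    proof (intro ballI)
      fix a b assume ab: "a \<in> C" "b \<in> C"
      have "op a b \<in> C" using assms(5) ab by auto
      moreover have "f a \<in> T" "f b \<in> T" using fT ab by auto
      ultimately show "h (op a b) = op (h a) (h b)" using f(2) ab fh assms(3) by simp
    qed
    ultimately show "h \<in> emb C T' op" using f(2) unfolding emb_def by auto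
  qed
  ultimately show ?thesis using assms(4) card_inj_on_le by blast
qed

lemma iso_inv:
  assumes "bij_betw g T T'" "\<forall>a\<in>T. \<forall>b\<in>T. g (op a b) = op (g a) (g b)"
    "\<forall>a\<in>T. \<forall>b\<in>T. op a b \<in> T"
  shows "bij_betw (inv_into T g) T' T \<and> (\<forall>a\<in>T'. \<forall>b\<in>T'. inv_into T g (op a b) = op (inv_into T g a) (inv_into T g b))"
proof
  show "bij_betw (inv_into T g) T' T" using assms(1) by (rule bij_betw_inv_into)
  show "\<forall>a\<in>T'. \<forall>b\<in>T'. inv_into T g (op a b) = op (inv_into T g a) (inv_into T g b)"
  proof (intro ballI)
    fix a b assume ab: "a \<in> T'" "b \<in> T'"
    let ?a = "inv_into T g a" and ?b = "inv_into T g b"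
    have in1: "?a \<in> T" "?b \<in> T" using ab assms(1) by (metis bij_betw_def inv_into_into)+
    have ga: "g ?a = a" "g ?b = b" using ab assms(1) by (metis bij_betw_def f_inv_into_f)+
    have "g (op ?a ?b) = op a b" using assms(2) in1 ga by metis
    moreover have "op ?a ?b \<in> T" using assms(3) in1 by blast
    moreover have "inj_on g T" using assms(1) by (simp add: bij_betw_def)
    ultimately show "inv_into T g (op a b) = op ?a ?b" by (metis inv_into_f_f)
  qed
qed

lemma exists_emb:
  assumes "rack R op" "finite R"
    and d1: "decomposition R op S1 T1" and d2: "decomposition R op S2 T2"
    and g: "bij_betw g T1 T2" "\<forall>a\<in>T1. \<forall>b\<in>T1. g (op a b) = op (g a) (g b)"
    and g': "bij_betw g' T2 T1" "\<forall>a\<in>T2. \<forall>b\<in>T2. g' (op a b) = op (g' a) (g' b)"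
    and c: "connected_rack S1 op"
  shows "\<exists>h. h \<in> emb S1 S2 op"
proof -
  have sub: "subrack R op S1" using d1 unfolding decomposition_def by auto
  have S1R: "S1 \<subseteq> R" using sub unfolding subrack_def by auto
  have fS1: "finite S1" using S1R assms(2) finite_subset by auto
  have T1R: "T1 \<subseteq> R" "T2 \<subseteq> R" using d1 d2 unfolding decomposition_def subrack_def by auto
  have clo: "\<forall>a\<in>S1. \<forall>b\<in>S1. op a b \<in> S1" using sub unfolding subrack_def by blast
  have e1: "card (emb S1 R op) = card (emb S1 S1 op) + card (emb S1 T1 op)"
    using emb_split[OF assms(1) d1 sub c assms(2)] .
  have e2: "card (emb S1 R op) = card (emb S1 S2 op) + card (emb S1 T2 op)"
    using emb_split[OF assms(1) d2 sub c assms(2)] .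
  have fT: "finite T1" "finite T2" using T1R assms(2) finite_subset by blast+
  have f1: "finite (emb S1 T1 op)" "finite (emb S1 T2 op)"
    using emb_finite[OF fT(1) fS1] emb_finite[OF fT(2) fS1] by blast+
  have gg: "inj_on g T1" "g ` T1 \<subseteq> T2" "inj_on g' T2" "g' ` T2 \<subseteq> T1"
    using g(1) g'(1) unfolding bij_betw_def by auto
  have le1: "card (emb S1 T1 op) \<le> card (emb S1 T2 op)"
    by (rule emb_le[OF gg(1,2) g(2) f1(2) clo])
  have le2: "card (emb S1 T2 op) \<le> card (emb S1 T1 op)"
    by (rule emb_le[OF gg(3,4) g'(2) f1(1) clo])
  have eq: "card (emb S1 S1 op) = card (emb S1 S2 op)" using e1 e2 le1 le2 by linarith
  have "restrict id S1 \<in> emb S1 S1 op"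
    unfolding emb_def using clo by (auto simp: inj_on_def)
  moreover have "finite (emb S1 S1 op)" using emb_finite fS1 by blast
  ultimately have "card (emb S1 S1 op) > 0" by (metis card_gt_0_iff empty_iff)
  then have "emb S1 S2 op \<noteq> {}" using eq by auto
  then show ?thesis by blast
qed

theorem corollary4p3:
  fixes R :: "'a set" and op :: "'a \<Rightarrow> 'a \<Rightarrow> 'a" and S1 T1 S2 T2 :: "'a set"
  assumes "rack R op" and "finite R"
    and "decomposition R op S1 T1" and "decomposition R op S2 T2"
    and "rack_iso T1 op T2 op"
    and "connected_rack S1 op" and "connected_rack S2 op"
  shows "rack_iso S1 op S2 op"
proof -
  obtain g where g: "bij_betw g T1 T2" "\<forall>a\<in>T1. \<forall>b\<in>T1. g (op a b) = op (g a) (g b)"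
    using assms(5) unfolding rack_iso_def by blast
  have clo: "\<forall>a\<in>T1. \<forall>b\<in>T1. op a b \<in> T1" using assms(3) unfolding decomposition_def subrack_def by blast
  note gi = iso_inv[OF g clo]
  obtain h where h: "h \<in> emb S1 S2 op"
    using exists_emb[OF assms(1,2,3,4) g gi[THEN conjunct1] gi[THEN conjunct2] assms(6)] by blast
  obtain h' where h': "h' \<in> emb S2 S1 op"
    using exists_emb[OF assms(1,2,4,3) gi[THEN conjunct1] gi[THEN conjunct2] g assms(7)] by blast
  have "S1 \<subseteq> R" "S2 \<subseteq> R" using assms(3,4) unfolding decomposition_def by auto
  then have fin: "finite S1" "finite S2" using assms(2) finite_subset by blast+
  have hi: "inj_on h S1" "h ` S1 \<subseteq> S2" "\<forall>a\<in>S1. \<forall>b\<in>S1. h (op a b) = op (h a) (h b)"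
    using h unfolding emb_def by blast+
  have hi': "inj_on h' S2" "h' ` S2 \<subseteq> S1" using h' unfolding emb_def by blast+
  have "card S1 \<le> card S2" using hi fin card_inj_on_le by blast
  moreover have "card S2 \<le> card S1" using hi' fin card_inj_on_le by blast
  ultimately have "card (h ` S1) = card S2" using hi(1) by (simp add: card_image)
  then have "h ` S1 = S2" using hi(2) fin(2) by (simp add: card_subset_eq)
  then have "bij_betw h S1 S2" using hi(1) by (simp add: bij_betw_def)
  then show ?thesis unfolding rack_iso_def using hi(3) by blast
qed

end
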